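(* Let $(\mathsf P,\mathcal O)$ be a semitopology, let $\mathsf{Val}$ be a set with at least two elements equipped with the discrete semitopology, and let $T\subseteq\mathsf P$ be any set. Suppose that for every $p,p'\in T$ and every function $f:\mathsf P\to\mathsf{Val}$, if $f$ is continuous at $p$ and at $p'$ then $f(p)=f(p')$. Then $T$ is transitive.
   Context: A semitopology is a pair $(\mathsf P,\mathcal O)$ where $\mathsf P$ is a set and $\mathcal O\subseteq\mathcal P(\mathsf P)$ contains $\varnothing$ and $\mathsf P$ and is closed under arbitrary unions; elements of $\mathcal O$ are open sets. Write $X\between Y$ when $X\cap Y\neq\varnothing$. A set $T\subseteq\mathsf P$ is transitive when for all $O,O'\in\mathcal O$, $O\between T$ and $T\between O'$ imply $O\between O'$. A function $f:\mathsf P\to\mathsf{Val}$ is continuous at $p$ when for every open $V\ni f(p)$ there is an open $O$ with $p\in O\subseteq f^{-1}(V)$. *)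

theory Defs
  imports Main
begin

definition semitopology :: "'a set \<Rightarrow> 'a set set \<Rightarrow> bool" where
  "semitopology P Opens \<longleftrightarrow>
     (\<forall>U\<in>Opens. U \<subseteq> P) \<and> {} \<in> Opens \<and> P \<in> Opens \<and>
     (\<forall>S. S \<subseteq> Opens \<longrightarrow> \<Union>S \<in> Opens)"

definition discrete_semitopology :: "'b set \<Rightarrow> 'b set set" where
  "discrete_semitopology V = Pow V"

definition intersects :: "'a set \<Rightarrow> 'a set \<Rightarrow> bool" (infix "\<between>" 50) where
  "X \<between> Y \<longleftrightarrow> X \<inter> Y \<noteq> {}"

definition transitive_set :: "'a set set \<Rightarrow> 'a set \<Rightarrow> bool" where
  "transitive_set Opens T \<longleftrightarrow>
     (\<forall>U\<in>Opens. \<forall>U'\<in>Opens. U \<between> T \<and> T \<between> U' \<longrightarrow> U \<between> U')"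

definition continuous_at ::
  "'a set \<Rightarrow> 'a set set \<Rightarrow> 'b set set \<Rightarrow> ('a \<Rightarrow> 'b) \<Rightarrow> 'a \<Rightarrow> bool" where
  "continuous_at P OP OV f p \<longleftrightarrow>
     (\<forall>V\<in>OV. f p \<in> V \<longrightarrow> (\<exists>U\<in>OP. p \<in> U \<and> U \<subseteq> {x\<in>P. f x \<in> V}))"

end

theory Submission
  imports Defs
begin

theorem proposition3p7:
  fixes P :: "'a set" and Opens :: "'a set set" and Val :: "'b set" and T :: "'a set"
  assumes "semitopology P Opens"
    and "\<exists>x\<in>Val. \<exists>y\<in>Val. x \<noteq> y"
    and "T \<subseteq> P"
    and "\<forall>p\<in>T. \<forall>p'\<in>T. \<forall>f. f ` P \<subseteq> Val \<longrightarrow>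
           continuous_at P Opens (discrete_semitopology Val) f p \<longrightarrow>
           continuous_at P Opens (discrete_semitopology Val) f p' \<longrightarrow> f p = f p'"
  shows "transitive_set Opens T"
  unfolding transitive_set_def
proof (intro ballI impI)
  fix U U' assume UO: "U \<in> Opens" and U'O: "U' \<in> Opens" and h: "U \<between> T \<and> T \<between> U'"
  show "U \<between> U'"
  proof (rule ccontr)
    assume d: "\<not> U \<between> U'"
    hence dis: "U \<inter> U' = {}" by (simp add: intersects_def)
    obtain a b where ab: "a \<in> Val" "b \<in> Val" "a \<noteq> b" using assms(2) by blast
    obtain p where p: "p \<in> U" "p \<in> T" using h by (auto simp: intersects_def)
    obtain p' where p': "p' \<in> U'" "p' \<in> T" using h by (auto simp: intersects_def)
    define f where "f = (\<lambda>x. if x \<in> U then a else b)"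
    have sub: "U \<subseteq> P" "U' \<subseteq> P" using assms(1) UO U'O by (auto simp: semitopology_def)
    have fP: "f ` P \<subseteq> Val" using ab by (auto simp: f_def)
    have c1: "continuous_at P Opens (discrete_semitopology Val) f p"
      unfolding continuous_at_def
    proof (intro ballI impI)
      fix V assume "V \<in> discrete_semitopology Val" "f p \<in> V"
      hence "a \<in> V" using p by (simp add: f_def)
      thus "\<exists>W\<in>Opens. p \<in> W \<and> W \<subseteq> {x \<in> P. f x \<in> V}"
        using UO p sub by (auto simp: f_def)
    qed
    have p'nU: "p' \<notin> U" using dis p' by blast
    have c2: "continuous_at P Opens (discrete_semitopology Val) f p'"
      unfolding continuous_at_def
    proof (intro ballI impI)
      fix V assume "V \<in> discrete_semitopology Val" "f p' \<in> V"
      hence "b \<in> V" using p'nU by (simp add: f_def)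
      thus "\<exists>W\<in>Opens. p' \<in> W \<and> W \<subseteq> {x \<in> P. f x \<in> V}"
        using U'O p' sub dis by (auto simp: f_def)
    qed
    have "f p = f p'" using assms(4) p(2) p'(2) fP c1 c2 by blast
    thus False using p p'nU ab by (simp add: f_def)
  qed
qed

end
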